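(* Let $\chi\geq 3$ and $m\geq 2$ be integers, let $T_\chi$ be any non-transitive tournament on $[\chi]$, and let $H=H(T_\chi,m)$. Let $n,t\geq 1$ be integers such that $\lfloor 3t/2\rfloor+1<n$. Then $R(P^{(3)}_{n,2},H)\geq (m-1)t+1$.
   Context: A tournament on $[\chi]$ is an orientation of the complete graph on $[\chi]$; it is transitive if acyclic. For a tournament $T_\chi$ on $[\chi]$ and $m\ge1$, $H(T_\chi,m)$ is the $3$-uniform hypergraph whose vertex set is partitioned into sets $A_1,\dots,A_\chi$ each of size $m$, with edge set $\{xyz: x,y\in A_i,\ z\in A_j,\ (i,j)\text{ an arc of }T_\chi\}$. $R(G,H)$ for 3-graphs is the least $N$ such that every red/blue colouring of the edges of $K^{(3)}_N$ contains a red copy of $G$ or a blue copy of $H$. The tight path $P^{(3)}_{n,2}$ has vertices $v_1,\dots,v_n$ and edges $\{v_i,v_{i+1},v_{i+2}\}$, $i\in[n-2]$. *)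

theory Defs
  imports Main
begin

text \<open>A 3-uniform hypergraph is given as a pair (V, E) of a vertex set and a set of
  edges, each edge being a 3-element subset of V.\<close>

type_synonym 'a hgraph = "'a set \<times> 'a set set"

text \<open>A red/blue colouring of the edges of the complete 3-graph on {0..<N} is a
  function col from sets to bool (True = red, False = blue); only its values on
  3-subsets of {0..<N} matter.\<close>

definition red_copy :: "(nat set \<Rightarrow> bool) \<Rightarrow> nat \<Rightarrow> 'a hgraph \<Rightarrow> bool" where
  "red_copy col N G \<longleftrightarrow> (\<exists>f. inj_on f (fst G) \<and> f ` fst G \<subseteq> {0..<N} \<and>
      (\<forall>e\<in>snd G. col (f ` e)))"

definition blue_copy :: "(nat set \<Rightarrow> bool) \<Rightarrow> nat \<Rightarrow> 'a hgraph \<Rightarrow> bool" where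
  "blue_copy col N G \<longleftrightarrow> (\<exists>f. inj_on f (fst G) \<and> f ` fst G \<subseteq> {0..<N} \<and>
      (\<forall>e\<in>snd G. \<not> col (f ` e)))"

definition ramsey3 :: "'a hgraph \<Rightarrow> 'b hgraph \<Rightarrow> nat" where
  "ramsey3 G H = (LEAST N. \<forall>col. red_copy col N G \<or> blue_copy col N H)"

definition tight_path :: "nat \<Rightarrow> nat hgraph" where
  "tight_path n = ({1..n}, {{i, i+1, i+2} | i. 1 \<le> i \<and> i + 2 \<le> n})"

definition tournament :: "nat \<Rightarrow> (nat \<times> nat) set \<Rightarrow> bool" where
  "tournament chi T \<longleftrightarrow> T \<subseteq> {1..chi} \<times> {1..chi} \<and>
     (\<forall>i\<in>{1..chi}. (i, i) \<notin> T) \<and>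
     (\<forall>i\<in>{1..chi}. \<forall>j\<in>{1..chi}. i \<noteq> j \<longrightarrow> ((i, j) \<in> T \<longleftrightarrow> (j, i) \<notin> T))"

definition transitive_tournament :: "nat \<Rightarrow> (nat \<times> nat) set \<Rightarrow> bool" where
  "transitive_tournament chi T \<longleftrightarrow> tournament chi T \<and> acyclic T"

definition HT :: "(nat \<times> nat) set \<Rightarrow> nat \<Rightarrow> nat \<Rightarrow> (nat \<times> nat) hgraph" where
  "HT T chi m = ({1..chi} \<times> {0..<m},
     {{x, y, z} | x y z i j. (i, j) \<in> T \<and> i \<in> {1..chi} \<and> j \<in> {1..chi} \<and>
        x \<in> {i} \<times> {0..<m} \<and> y \<in> {i} \<times> {0..<m} \<and> x \<noteq> y \<and> z \<in> {j} \<times> {0..<m}})"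

end

theory Submission
  imports Defs "HOL-Library.Ramsey"
begin

lemma embed_lemma:
  fixes V :: "'a set" and Hs :: "nat set"
  assumes "finite V" "card V \<le> card Hs" "finite Hs" "Hs \<subseteq> {..<N}"
    and "\<forall>e\<in>E. e \<subseteq> V \<and> card e = 3" and "\<forall>X \<in> nsets Hs 3. Q X"
  shows "\<exists>f. inj_on f V \<and> f ` V \<subseteq> {0..<N} \<and> (\<forall>e\<in>E. Q (f ` e))"
proof -
  obtain f where f: "f ` V \<subseteq> Hs" "inj_on f V"
    using card_le_inj[OF assms(1) assms(3) assms(2)] by blast
  have "\<forall>e\<in>E. Q (f ` e)"
  proof
    fix e assume e: "e \<in> E"
    have "inj_on f e" using f(2) assms(5) e inj_on_subset by blast
    then have "card (f ` e) = 3" using assms(5) e card_image by metis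
    moreover have "f ` e \<subseteq> Hs" using f(1) assms(5) e by blast
    moreover have "finite (f ` e)" using assms(3) calculation(2) finite_subset by blast
    ultimately have "f ` e \<in> nsets Hs 3" by (simp add: nsets_def)
    then show "Q (f ` e)" using assms(6) by blast
  qed
  moreover have "f ` V \<subseteq> {..<N}" using f(1) assms(4) by blast
  then have "f ` V \<subseteq> {0..<N}" using lessThan_atLeast0 by simp
  ultimately show ?thesis using f(2) by blast
qed

theorem proposition1p13:
  fixes chi m n t :: nat and T :: "(nat \<times> nat) set"
  assumes "chi \<ge> 3" and "m \<ge> 2"
    and "tournament chi T" and "\<not> transitive_tournament chi T"
    and "n \<ge> 1" and "t \<ge> 1" and "(3 * t) div 2 + 1 < n"
  shows "ramsey3 (tight_path n) (HT T chi m) \<ge> (m - 1) * t + 1"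
proof -
  have Tsub: "T \<subseteq> {1..chi} \<times> {1..chi}" and Tirr: "\<forall>i\<in>{1..chi}. (i, i) \<notin> T"
    using assms(3) unfolding tournament_def by auto
  have ex: "\<exists>N. \<forall>col. red_copy col N (tight_path n) \<or> blue_copy col N (HT T chi m)"
  proof -
    define k where "k = max n (chi * m)"
    obtain N :: nat where N: "partn_lst {..<N} [k,k] 3" using ramsey_full[of "[k,k]" 3] by blast
    have "\<forall>col. red_copy col N (tight_path n) \<or> blue_copy col N (HT T chi m)"
    proof
      fix col :: "nat set \<Rightarrow> bool"
      define g where "g X = (if col X then 0 else 1::nat)" for X
      have g: "g \<in> nsets {..<N} 3 \<rightarrow> {..<length [k,k]}" by (simp add: g_def)
      obtain i Hs where i: "i < length [k,k]" "Hs \<in> nsets {..<N} ([k,k]!i)" "g ` (nsets Hs 3) \<subseteq> {i}"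
        using partn_lstE[OF N g refl] by blast
      have Hs: "finite Hs" "card Hs = k" "Hs \<subseteq> {..<N}"
        using i(2) i(1) less_2_cases_iff by (auto simp: nsets_def nth_Cons')
      have E1: "\<forall>e\<in>snd (tight_path n). e \<subseteq> fst (tight_path n) \<and> card e = 3"
        by (auto simp: tight_path_def)
      have E2: "\<forall>e\<in>snd (HT T chi m). e \<subseteq> fst (HT T chi m) \<and> card e = 3"
      proof
        fix e assume "e \<in> snd (HT T chi m)"
        then obtain x y z i j where "e = {x,y,z}" "(i, j) \<in> T" "i \<in> {1..chi}" "j \<in> {1..chi}"
          "x \<in> {i} \<times> {0..<m}" "y \<in> {i} \<times> {0..<m}" "x \<noteq> y" "z \<in> {j} \<times> {0..<m}"
          by (auto simp: HT_def)
        moreover have "i \<noteq> j" using calculation Tirr by blast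
        ultimately show "e \<subseteq> fst (HT T chi m) \<and> card e = 3"
          by (auto simp: HT_def)
      qed
      show "red_copy col N (tight_path n) \<or> blue_copy col N (HT T chi m)"
      proof (cases "i = 0")
        case True
        then have "\<forall>X \<in> nsets Hs 3. col X" using i(3) by (auto simp: g_def split: if_splits)
        moreover have "card (fst (tight_path n)) \<le> card Hs" using Hs k_def by (simp add: tight_path_def)
        ultimately have "red_copy col N (tight_path n)"
          unfolding red_copy_def
          using embed_lemma[OF _ _ Hs(1) Hs(3) E1, of col] by (simp add: tight_path_def)
        then show ?thesis by blast
      next
        case False
        then have "\<forall>X \<in> nsets Hs 3. \<not> col X" using i(3) by (auto simp: g_def split: if_splits)
        moreover have "card (fst (HT T chi m)) \<le> card Hs" using Hs k_def by (simp add: HT_def)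
        ultimately have "blue_copy col N (HT T chi m)"
          unfolding blue_copy_def
          using embed_lemma[OF _ _ Hs(1) Hs(3) E2, of "\<lambda>X. \<not> col X"] by (simp add: HT_def)
        then show ?thesis by blast
      qed
    qed
    then show ?thesis by blast
  qed
  define N0 where "N0 = (m - 1) * t"
  define blk where "blk v = v div t" for v :: nat
  define col where "col S = (\<exists>x\<in>S. \<exists>y\<in>S. x \<noteq> y \<and> blk x = blk y \<and> (\<forall>z\<in>S. blk x \<le> blk z))" for S
  have tpos: "t > 0" using assms(6) by simp
  have nored: "\<not> red_copy col N0 (tight_path n)"
  proof
    assume "red_copy col N0 (tight_path n)"
    then obtain f where inj: "inj_on f {1..n}" and rng: "f ` {1..n} \<subseteq> {0..<N0}"
      and red: "\<forall>e\<in>snd (tight_path n). col (f ` e)"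
      by (auto simp: red_copy_def tight_path_def)
    have n3: "n \<ge> 3" using assms(6,7) by linarith
    have W: "col {f i, f (i+1), f (i+2)}" if "1 \<le> i" "i + 2 \<le> n" for i
    proof -
      have "{i, i+1, i+2} \<in> snd (tight_path n)" using that by (auto simp: tight_path_def)
      then show ?thesis using red by auto
    qed
    define b where "b i = blk (f i)" for i
    define a where "a = Min (b ` {1..n})"
    have amin: "a \<le> b i" if "i \<in> {1..n}" for i using that by (simp add: a_def)
    have "a \<in> b ` {1..n}" unfolding a_def using n3 by (intro Min_in) auto
    then obtain p where p: "p \<in> {1..n}" "b p = a" by blast
    define hasA where "hasA i = (\<exists>j\<in>{i..i+2}. b j = a)" for i
    define twoA where "twoA i = (\<exists>j\<in>{i..i+2}. \<exists>j'\<in>{i..i+2}. j \<noteq> j' \<and> b j = a \<and> b j' = a)" for i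
    have W2: "\<exists>j\<in>{i..i+2}. \<exists>j'\<in>{i..i+2}. j \<noteq> j' \<and> b j = b j' \<and> (\<forall>l\<in>{i..i+2}. b j \<le> b l)"
      if "1 \<le> i" "i + 2 \<le> n" for i
    proof -
      have c: "col {f i, f (i+1), f (i+2)}" using W that by blast
      have e: "{f i, f (i+1), f (i+2)} = f ` {i..i+2}"
      proof -
        have "{i..i+2} = {i, i+1, i+2}" by auto
        then show ?thesis by simp
      qed
      from c[unfolded col_def e] obtain x y where xy: "x \<in> f ` {i..i+2}" "y \<in> f ` {i..i+2}" "x \<noteq> y"
        "blk x = blk y" "\<forall>z\<in>f ` {i..i+2}. blk x \<le> blk z" by blast
      then obtain j j' where jj: "j \<in> {i..i+2}" "j' \<in> {i..i+2}" "x = f j" "y = f j'" by blast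
      have "j \<noteq> j'" using jj xy(3) by blast
      moreover have "b j = b j'" using jj xy(4) unfolding b_def by simp
      moreover have "\<forall>l\<in>{i..i+2}. b j \<le> b l" using jj(3) xy(5) unfolding b_def by blast
      ultimately show ?thesis using jj(1,2) by blast
    qed
    have two: "twoA i" if hyp: "1 \<le> i" "i + 2 \<le> n" "hasA i" for i
    proof -
      obtain j j' where jj: "j\<in>{i..i+2}" "j'\<in>{i..i+2}" "j \<noteq> j'" "b j = b j'" "\<forall>l\<in>{i..i+2}. b j \<le> b l"
        using W2[OF hyp(1,2)] by blast
      obtain q where q: "q \<in> {i..i+2}" "b q = a" using hyp(3) hasA_def by blast
      have "b j \<le> a" using jj(5) q by fastforce
      moreover have "a \<le> b j" using amin jj(1) hyp by simp
      ultimately have "b j = a" "b j' = a" using jj(4) by auto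
      then show ?thesis unfolding twoA_def using jj(1,2,3) by blast
    qed
    have step: "hasA i \<longleftrightarrow> hasA (i+1)" if "1 \<le> i" "i + 3 \<le> n" for i
    proof
      assume "hasA i"
      then have "twoA i" using two that by simp
      then obtain j j' where "j\<in>{i..i+2}" "j'\<in>{i..i+2}" "j \<noteq> j'" "b j = a" "b j' = a"
        unfolding twoA_def by blast
      then have "(j \<ge> i+1 \<and> b j = a) \<or> (j' \<ge> i+1 \<and> b j' = a)"
        "j \<le> i + 3" "j' \<le> i + 3" by auto
      then obtain l where l: "l \<ge> i+1" "l \<le> i+3" "b l = a" by blast
      show "hasA (i+1)" unfolding hasA_def
        by (rule bexI[of _ l]) (use l in auto)
    next
      assume "hasA (i+1)"
      then have "twoA (i+1)" using two that by simp
      then obtain j j' where "j\<in>{i+1..i+1+2}" "j'\<in>{i+1..i+1+2}" "j \<noteq> j'" "b j = a" "b j' = a"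
        unfolding twoA_def by blast
      then have "(j \<le> i+2 \<and> b j = a) \<or> (j' \<le> i+2 \<and> b j' = a)"
        "j \<ge> i" "j' \<ge> i" by auto
      then obtain l where l: "l \<ge> i" "l \<le> i+2" "b l = a" by blast
      show "hasA i" unfolding hasA_def
        by (rule bexI[of _ l]) (use l in auto)
    qed
    define q where "q = (if p + 2 \<le> n then p else n - 2)"
    have q12: "1 \<le> q" "q + 2 \<le> n" "q \<le> p" "p \<le> q + 2"
      using p n3 unfolding q_def by auto
    have q: "1 \<le> q" "q + 2 \<le> n" "hasA q"
      using q12 p(2) unfolding hasA_def by (auto intro!: bexI[of _ p])
    have up: "hasA (q + d)" if "q + d + 2 \<le> n" for d
      using that
    proof (induction d)
      case 0 then show ?case using q by simp
    next
      case (Suc d)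
      then have "hasA (q + d)" by simp
      then show ?case using step[of "q + d"] Suc.prems q(1) by simp
    qed
    have down: "hasA (q - d)" if "d < q" for d
      using that
    proof (induction d)
      case 0 then show ?case using q by simp
    next
      case (Suc d)
      then have "hasA (q - d)" by simp
      moreover have "q - d = (q - Suc d) + 1" using Suc.prems by simp
      ultimately show ?case using step[of "q - Suc d"] Suc.prems q(2) by simp
    qed
    have allA: "twoA i" if "1 \<le> i" "i + 2 \<le> n" for i
    proof (cases "i \<le> q")
      case True
      then have "hasA (q - (q - i))" using down[of "q - i"] that by simp
      then show ?thesis using two that True by simp
    next
      case False
      then have "hasA (q + (i - q))" using up[of "i - q"] that by simp
      then show ?thesis using two that False by simp
    qed
    define S where "S = {j\<in>{1..n}. b j = a}"
    define K where "K = {j\<in>{1..n}. b j \<noteq> a}"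
    have gap: "j' \<ge> j + 3" if hyp: "j \<in> K" "j' \<in> K" "j < j'" for j j'
    proof (rule ccontr)
      assume "\<not> j' \<ge> j + 3"
      define i where "i = (if j + 2 \<le> n then j else n - 2)"
      have i: "1 \<le> i" "i + 2 \<le> n" "i \<le> j" "j' \<le> i + 2"
        using hyp \<open>\<not> j' \<ge> j + 3\<close> n3 unfolding i_def K_def by auto
      obtain k k' where "k\<in>{i..i+2}" "k'\<in>{i..i+2}" "k \<noteq> k'" "b k = a" "b k' = a"
        using allA[OF i(1,2)] unfolding twoA_def by blast
      moreover have "b j \<noteq> a" "b j' \<noteq> a" using hyp unfolding K_def by auto
      ultimately have "k \<noteq> j" "k \<noteq> j'" "k' \<noteq> j" "k' \<noteq> j'" by auto
      with \<open>k\<in>{i..i+2}\<close> \<open>k'\<in>{i..i+2}\<close> \<open>k \<noteq> k'\<close> i hyp(3) show False by auto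
    qed
    have cardS: "card S \<le> t"
    proof -
      have "f ` S \<subseteq> {a*t..<a*t+t}"
      proof
        fix v assume "v \<in> f ` S"
        then have "v div t = a" unfolding S_def b_def blk_def by auto
        then have "v = a*t + v mod t" using div_mult_mod_eq[of v t] by simp
        moreover have "v mod t < t" using tpos by simp
        ultimately have "a*t \<le> v" "v < a*t+t" by linarith+
        then show "v \<in> {a*t..<a*t+t}" by simp
      qed
      moreover have "S \<subseteq> {1..n}" unfolding S_def by blast
      then have "inj_on f S" using inj inj_on_subset by blast
      ultimately have "card S \<le> card {a*t..<a*t+t}" using card_inj_on_le by blast
      then show ?thesis by simp
    qed
    have cardK: "3 * card K \<le> n + 2"
    proof -
      define g where "g = (\<lambda>(k::nat, j::nat). k + j)"
      have "inj_on g (K \<times> {0..<3::nat})"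
      proof (rule inj_onI)
        fix x y assume xy: "x \<in> K \<times> {0..<3::nat}" "y \<in> K \<times> {0..<3::nat}" "g x = g y"
        obtain k j k' j' where x: "x = (k, j)" and y: "y = (k', j')" by fastforce
        have "k = k'"
        proof (rule ccontr)
          assume "k \<noteq> k'"
          then have "k < k' \<or> k' < k" by auto
          then show False
            using gap[of k k'] gap[of k' k] xy x y unfolding g_def by auto
        qed
        then show "x = y" using xy x y unfolding g_def by auto
      qed
      moreover have "g ` (K \<times> {0..<3::nat}) \<subseteq> {1..n+2}" unfolding g_def K_def by auto
      ultimately have "card (K \<times> {0..<3::nat}) \<le> card {1..n+2}"
        using card_inj_on_le[of g "K \<times> {0..<3::nat}" "{1..n+2}"] by blast
      moreover have "finite K" unfolding K_def by simp
      ultimately show ?thesis by (simp add: card_cartesian_product)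
    qed
    have "card S + card K = n"
    proof -
      have "S \<union> K = {1..n}" "S \<inter> K = {}" unfolding S_def K_def by auto
      moreover have "finite S" "finite K" unfolding S_def K_def by auto
      ultimately have "card {1..n} = card S + card K" using card_Un_disjoint[of S K] by simp
      then show ?thesis by simp
    qed
    then show False using cardS cardK assms(7) by linarith
  qed
  have noblue: "\<not> blue_copy col N0 (HT T chi m)"
  proof
    assume "blue_copy col N0 (HT T chi m)"
    then obtain f where inj: "inj_on f ({1..chi} \<times> {0..<m})"
      and rng: "f ` ({1..chi} \<times> {0..<m}) \<subseteq> {0..<N0}"
      and blue: "\<forall>e\<in>snd (HT T chi m). \<not> col (f ` e)"
      by (auto simp: blue_copy_def HT_def)
    have pig: "\<exists>x y. x \<in> {i} \<times> {0..<m} \<and> y \<in> {i} \<times> {0..<m} \<and> x \<noteq> y \<and> blk (f x) = blk (f y)"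
      if i: "i \<in> {1..chi}" for i
    proof (rule ccontr)
      assume nex: "\<not> ?thesis"
      have "inj_on (\<lambda>x. blk (f x)) ({i} \<times> {0..<m})"
        using nex unfolding inj_on_def by blast
      moreover have "(\<lambda>x. blk (f x)) ` ({i} \<times> {0..<m}) \<subseteq> {0..<m-1}"
      proof
        fix c assume "c \<in> (\<lambda>x. blk (f x)) ` ({i} \<times> {0..<m})"
        then obtain x where x: "x \<in> {i} \<times> {0..<m}" "c = blk (f x)" by blast
        then have "x \<in> {1..chi} \<times> {0..<m}" using i by auto
        then have "f x \<in> {0..<N0}" using rng by blast
        then have "f x < (m-1) * t" unfolding N0_def by simp
        then have "f x div t < m - 1" using tpos by (simp add: div_less_iff_less_mult)
        then show "c \<in> {0..<m-1}" using x unfolding blk_def by simp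
      qed
      ultimately have "card ({i} \<times> {0..<m}) \<le> card {0..<m-1}"
        using card_inj_on_le[of "\<lambda>x. blk (f x)" "{i} \<times> {0..<m}" "{0..<m-1}"] by blast
      then show False using assms(2) by (simp add: card_cartesian_product)
    qed
    define beta where "beta i = (SOME c. \<exists>x y. x \<in> {i} \<times> {0..<m} \<and> y \<in> {i} \<times> {0..<m} \<and> x \<noteq> y \<and> blk (f x) = c \<and> blk (f y) = c)" for i
    have beta: "\<exists>x y. x \<in> {i} \<times> {0..<m} \<and> y \<in> {i} \<times> {0..<m} \<and> x \<noteq> y \<and> blk (f x) = beta i \<and> blk (f y) = beta i"
      if "i \<in> {1..chi}" for i
    proof -
      have "\<exists>c. \<exists>x y. x \<in> {i} \<times> {0..<m} \<and> y \<in> {i} \<times> {0..<m} \<and> x \<noteq> y \<and> blk (f x) = c \<and> blk (f y) = c"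
        using pig[OF that] by metis
      then show ?thesis unfolding beta_def by (rule someI_ex)
    qed
    have dec: "beta j < beta i" if ij: "(i, j) \<in> T" for i j
    proof -
      have ij': "i \<in> {1..chi}" "j \<in> {1..chi}" using ij Tsub by auto
      obtain x y where xy: "x \<in> {i} \<times> {0..<m}" "y \<in> {i} \<times> {0..<m}" "x \<noteq> y"
        "blk (f x) = beta i" "blk (f y) = beta i" using beta[OF ij'(1)] by blast
      obtain z w where zw: "z \<in> {j} \<times> {0..<m}" "blk (f z) = beta j" using beta[OF ij'(2)] by blast
      have "{x, y, z} \<in> snd (HT T chi m)"
        unfolding HT_def snd_conv using ij ij'(1,2) xy(1,2,3) zw(1) by blast
      then have "\<not> col (f ` {x, y, z})" using blue by blast
      then have nc: "\<not> col {f x, f y, f z}" by simp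
      have "x \<in> {1..chi} \<times> {0..<m}" "y \<in> {1..chi} \<times> {0..<m}" using xy(1,2) ij'(1) by auto
      then have fxy: "f x \<noteq> f y" using inj xy(3) unfolding inj_on_def by blast
      show ?thesis
      proof (rule ccontr)
        assume "\<not> beta j < beta i"
        then have "\<forall>w\<in>{f x, f y, f z}. blk (f x) \<le> blk w" using xy(4,5) zw(2) by auto
        then have "col {f x, f y, f z}" unfolding col_def using fxy xy(4,5)
          by (intro bexI[of _ "f x"] bexI[of _ "f y"]) auto
        then show False using nc by blast
      qed
    qed
    have tr: "beta j < beta i" if "(i, j) \<in> T\<^sup>+" for i j
      using that
    proof (induction rule: trancl_induct)
      case (base y) then show ?case using dec by blast
    next
      case (step y z) then show ?case using dec[of y z] by linarith
    qed
    have "acyclic T" unfolding acyclic_def using tr by blast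
    then show False using assms(3,4) unfolding transitive_tournament_def by blast
  qed
  have noP: "\<not> (red_copy col N (tight_path n) \<or> blue_copy col N (HT T chi m))" if "N \<le> N0" for N
  proof -
    have "{0..<N} \<subseteq> {0..<N0}" using that by auto
    then have "red_copy col N G \<Longrightarrow> red_copy col N0 G" "blue_copy col N H \<Longrightarrow> blue_copy col N0 H"
      for G :: "nat hgraph" and H :: "(nat \<times> nat) hgraph"
      unfolding red_copy_def blue_copy_def by (meson subset_trans)+
    then show ?thesis using nored noblue by blast
  qed
  define P where "P N = (\<forall>col. red_copy col N (tight_path n) \<or> blue_copy col N (HT T chi m))" for N
  have "P (LEAST N. P N)" using ex unfolding P_def[symmetric] by (rule LeastI_ex)
  then have "\<not> (LEAST N. P N) \<le> N0" using noP unfolding P_def by blast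
  then show ?thesis unfolding ramsey3_def P_def[symmetric] N0_def by simp
qed

end
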